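(* The following conditions are equivalent. (i) The sequence $N$ is a semi-free DG $B$-module; (ii) The sequence $N$ is a DG $B$-module; and (iii) For all integers $i$ and $j$ we have $\xi_i=-\alpha_i$, $\tau_i=t$, $\alpha_{i-1}\alpha_i=-t\delta_i$, $\delta_i\alpha_{i+1}=\alpha_{i-1}\delta_{i+1}$, $\delta_{i+j}(\gamma_{i,s} m_j)=\gamma_{i,s} \delta_j(m_j)$, $\alpha_{i+j}(\gamma_{i,s} m_j)=\partial_i^A(\gamma_{i,s})m_j+(-1)^i\gamma_{i,s}\alpha_j(m_j)$ for $s=1,\ldots,r_i$ and for all $m_j\in M_j$. In particular, if $N$ is a DG $B$-module, then $\partial_i^N=\begin{bmatrix}-\alpha_{i-1} & \delta_i \\ t & \alpha_i\end{bmatrix}$.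
   Context: Let $R$ be a commutative noetherian ring. Let $A$ be a (commutative, positively graded) DG $R$-algebra such that each $A_i$ is free over $R$ of finite rank, with fixed basis $\{\gamma_{i,1},\ldots,\gamma_{i,r_i}\}$ of $A_i$. Let $t\in R$, let $K=K^R(t)$ be the Koszul complex $0\to K_1\xrightarrow{t}K_0\to 0$ with bases $1\in K_0$, $e\in K_1$, and let $B=K^R(t)\otimes_R A$. Identify $B_i=(K_1\otimes_R A_{i-1})\oplus(K_0\otimes_R A_i)$ with $A_{i-1}\oplus A_i$, writing $e\otimes a_{i-1}+1\otimes a_i$ as the column vector $\left[\begin{smallmatrix}a_{i-1}\\ a_i\end{smallmatrix}\right]$; then $\partial^B_i=\left[\begin{smallmatrix}-\partial^A_{i-1} & 0\\ t & \partial^A_i\end{smallmatrix}\right]$ and the product is $\left[\begin{smallmatrix}a_{i-1}\\ a_i\end{smallmatrix}\right]\left[\begin{smallmatrix}c_{j-1}\\ c_j\end{smallmatrix}\right]=\left[\begin{smallmatrix}a_{i-1}c_j+(-1)^ia_ic_{j-1}\\ a_ic_j\end{smallmatrix}\right]$. Let $\{\beta_i\}_{i\in\mathbb Z}$ be cardinal numbers with $\beta_i=0$ for $i\ll0$, and set $M_i=\bigoplus_{j\ge0}A_j^{(\beta_{i-j})}$ (direct sums of copies of $A_j$ indexed by $\beta_{i-j}$), with scalar multiplication by $A$ componentwise. Let $\xi_i\colon M_i\to M_{i-1}$, $\tau_i\colon M_i\to M_i$, $\delta_i\colon M_i\to M_{i-2}$, $\alpha_i\colon M_i\to M_{i-1}$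 be $R$-module homomorphisms, set $N_i=M_{i-1}\oplus M_i$ and $\partial^N_i=\left[\begin{smallmatrix}\xi_{i-1}&\delta_i\\ \tau_{i-1}&\alpha_i\end{smallmatrix}\right]\colon N_i\to N_{i-1}$, and let $N$ be the sequence $\cdots\to N_i\xrightarrow{\partial^N_i}N_{i-1}\to\cdots$ (not assumed to be a complex), with $B$ acting by $\left[\begin{smallmatrix}a_{i-1}\\ a_i\end{smallmatrix}\right]\left[\begin{smallmatrix}m_{j-1}\\ m_j\end{smallmatrix}\right]=\left[\begin{smallmatrix}a_{i-1}m_j+(-1)^ia_im_{j-1}\\ a_im_j\end{smallmatrix}\right]$. *)

theory Defs
  imports Main "HOL-Library.Function_Algebras" "HOL-Library.Product_Plus"
begin

definition sgnx :: "int \<Rightarrow> 'x::uminus \<Rightarrow> 'x" where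
  "sgnx i x = (if even i then x else - x)"

definition noetherian_ring :: "'r::comm_ring_1 itself \<Rightarrow> bool" where
  "noetherian_ring (T::'r itself) \<longleftrightarrow>
     (\<forall>I::'r set. (0 \<in> I \<and> (\<forall>x\<in>I. \<forall>y\<in>I. x + y \<in> I) \<and> (\<forall>c. \<forall>x\<in>I. c * x \<in> I))
        \<longrightarrow> (\<exists>S. finite S \<and> S \<subseteq> I \<and> I = {y. \<exists>c. y = (\<Sum>s\<in>S. c s * s)}))"

definition submod :: "('r::comm_ring_1 \<Rightarrow> 'x::ab_group_add \<Rightarrow> 'x) \<Rightarrow> 'x set \<Rightarrow> bool" where
  "submod sc S \<longleftrightarrow> 0 \<in> S \<and> (\<forall>x\<in>S. \<forall>y\<in>S. x + y \<in> S) \<and> (\<forall>x\<in>S. - x \<in> S)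
      \<and> (\<forall>c. \<forall>x\<in>S. sc c x \<in> S)"

definition lin_on :: "('r::comm_ring_1 \<Rightarrow> 'x::ab_group_add \<Rightarrow> 'x) \<Rightarrow> ('r \<Rightarrow> 'y::ab_group_add \<Rightarrow> 'y)
    \<Rightarrow> 'x set \<Rightarrow> 'y set \<Rightarrow> ('x \<Rightarrow> 'y) \<Rightarrow> bool" where
  "lin_on sx sy S T f \<longleftrightarrow> (\<forall>x\<in>S. f x \<in> T) \<and> (\<forall>x\<in>S. \<forall>y\<in>S. f (x + y) = f x + f y)
      \<and> (\<forall>c. \<forall>x\<in>S. f (sx c x) = sy c (f x))"

(* Graded objects: the component of degree i of a graded object is a   *)
(* set  X i  inside an ambient abelian group; degree-indexed operations *)

text \<open>A commutative (strictly graded-commutative), positively graded DG R-algebra.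
  sm = R-scalar multiplication, Ac i = A_i, mu i j : A_i x A_j -> A_(i+j),
  one = unit, dA i : A_i -> A_(i-1).\<close>
definition comm_dg_algebra :: "('r::comm_ring_1 \<Rightarrow> 'a::ab_group_add \<Rightarrow> 'a) \<Rightarrow> (int \<Rightarrow> 'a set)
    \<Rightarrow> (int \<Rightarrow> int \<Rightarrow> 'a \<Rightarrow> 'a \<Rightarrow> 'a) \<Rightarrow> 'a \<Rightarrow> (int \<Rightarrow> 'a \<Rightarrow> 'a) \<Rightarrow> bool" where
  "comm_dg_algebra sm Ac mu one dA \<longleftrightarrow>
     (\<forall>c x y. sm c (x + y) = sm c x + sm c y)
   \<and> (\<forall>c c' x. sm (c + c') x = sm c x + sm c' x)
   \<and> (\<forall>c c' x. sm c (sm c' x) = sm (c * c') x)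
   \<and> (\<forall>x. sm 1 x = x)
   \<and> (\<forall>i. submod sm (Ac i))
   \<and> (\<forall>i<0. Ac i = {0})
   \<and> one \<in> Ac 0
   \<and> (\<forall>i j. \<forall>a\<in>Ac i. \<forall>b\<in>Ac j. mu i j a b \<in> Ac (i + j))
   \<and> (\<forall>i j. \<forall>a\<in>Ac i. \<forall>a'\<in>Ac i. \<forall>b\<in>Ac j. mu i j (a + a') b = mu i j a b + mu i j a' b)
   \<and> (\<forall>i j. \<forall>a\<in>Ac i. \<forall>b\<in>Ac j. \<forall>b'\<in>Ac j. mu i j a (b + b') = mu i j a b + mu i j a b')
   \<and> (\<forall>i j c. \<forall>a\<in>Ac i. \<forall>b\<in>Ac j. mu i j (sm c a) b = sm c (mu i j a b) \<and> mu i j a (sm c b) = sm c (mu i j a b))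
   \<and> (\<forall>i j k. \<forall>a\<in>Ac i. \<forall>b\<in>Ac j. \<forall>c\<in>Ac k. mu (i + j) k (mu i j a b) c = mu i (j + k) a (mu j k b c))
   \<and> (\<forall>i. \<forall>a\<in>Ac i. mu 0 i one a = a \<and> mu i 0 a one = a)
   \<and> (\<forall>i j. \<forall>a\<in>Ac i. \<forall>b\<in>Ac j. mu i j a b = sgnx (i * j) (mu j i b a))
   \<and> (\<forall>i. odd i \<longrightarrow> (\<forall>a\<in>Ac i. mu i i a a = 0))
   \<and> (\<forall>i. lin_on sm sm (Ac i) (Ac (i - 1)) (dA i))
   \<and> (\<forall>i. \<forall>a\<in>Ac i. dA (i - 1) (dA i a) = 0)
   \<and> (\<forall>i j. \<forall>a\<in>Ac i. \<forall>b\<in>Ac j.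
        dA (i + j) (mu i j a b) = mu (i - 1) j (dA i a) b + sgnx i (mu i (j - 1) a (dA j b)))"

definition graded_free_basis :: "('r::comm_ring_1 \<Rightarrow> 'a::ab_group_add \<Rightarrow> 'a) \<Rightarrow> (int \<Rightarrow> 'a set)
    \<Rightarrow> (int \<Rightarrow> nat) \<Rightarrow> (int \<Rightarrow> nat \<Rightarrow> 'a) \<Rightarrow> bool" where
  "graded_free_basis sm Ac r gam \<longleftrightarrow>
     (\<forall>i. (\<forall>s\<in>{1..r i}. gam i s \<in> Ac i)
        \<and> (\<forall>x\<in>Ac i. \<exists>!c::nat \<Rightarrow> 'r. (\<forall>s. s \<notin> {1..r i} \<longrightarrow> c s = 0)
                                 \<and> x = (\<Sum>s=1..r i. sm (c s) (gam i s))))"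

text \<open>B: scalar multiplication smB, components Bc,
  products muB i j, differential dB, unit oneB. N: scalar multiplication smN, components Nc,
  action act i j : B_i x N_j -> N_(i+j), differential dN i : N_i -> N_(i-1).\<close>
definition dg_module :: "('r::comm_ring_1 \<Rightarrow> 'b::ab_group_add \<Rightarrow> 'b) \<Rightarrow> (int \<Rightarrow> 'b set)
    \<Rightarrow> (int \<Rightarrow> int \<Rightarrow> 'b \<Rightarrow> 'b \<Rightarrow> 'b) \<Rightarrow> (int \<Rightarrow> 'b \<Rightarrow> 'b) \<Rightarrow> 'b
    \<Rightarrow> ('r \<Rightarrow> 'n::ab_group_add \<Rightarrow> 'n) \<Rightarrow> (int \<Rightarrow> 'n set)
    \<Rightarrow> (int \<Rightarrow> int \<Rightarrow> 'b \<Rightarrow> 'n \<Rightarrow> 'n) \<Rightarrow> (int \<Rightarrow> 'n \<Rightarrow> 'n) \<Rightarrow> bool" where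
  "dg_module smB Bc muB dB oneB smN Nc act dN \<longleftrightarrow>
     (\<forall>i. submod smN (Nc i))
   \<and> (\<forall>i. lin_on smN smN (Nc i) (Nc (i - 1)) (dN i))
   \<and> (\<forall>i. \<forall>n\<in>Nc i. dN (i - 1) (dN i n) = 0)
   \<and> (\<forall>i j. \<forall>b\<in>Bc i. \<forall>n\<in>Nc j. act i j b n \<in> Nc (i + j))
   \<and> (\<forall>i j. \<forall>b\<in>Bc i. \<forall>b'\<in>Bc i. \<forall>n\<in>Nc j. act i j (b + b') n = act i j b n + act i j b' n)
   \<and> (\<forall>i j. \<forall>b\<in>Bc i. \<forall>n\<in>Nc j. \<forall>n'\<in>Nc j. act i j b (n + n') = act i j b n + act i j b n')
   \<and> (\<forall>i j c. \<forall>b\<in>Bc i. \<forall>n\<in>Nc j.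
        act i j (smB c b) n = smN c (act i j b n) \<and> act i j b (smN c n) = smN c (act i j b n))
   \<and> (\<forall>j. \<forall>n\<in>Nc j. act 0 j oneB n = n)
   \<and> (\<forall>i k j. \<forall>b\<in>Bc i. \<forall>b'\<in>Bc k. \<forall>n\<in>Nc j.
        act (i + k) j (muB i k b b') n = act i (k + j) b (act k j b' n))
   \<and> (\<forall>i j. \<forall>b\<in>Bc i. \<forall>n\<in>Nc j.
        dN (i + j) (act i j b n) = act (i - 1) j (dB i b) n + sgnx i (act i (j - 1) b (dN j n)))"

text \<open>Finite B-linear combinations, landing in degree k, of the homogeneous elements in U
  (an element of U is a pair (degree, element)).\<close>
definition bcomb :: "(int \<Rightarrow> 'b::zero set) \<Rightarrow> (int \<Rightarrow> int \<Rightarrow> 'b \<Rightarrow> 'n \<Rightarrow> 'n::comm_monoid_add)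
    \<Rightarrow> (int \<times> 'n) set \<Rightarrow> int \<Rightarrow> 'n set" where
  "bcomb Bc act U k = {n. \<exists>c. finite {x. c x \<noteq> 0} \<and> (\<forall>x. c x \<noteq> 0 \<longrightarrow> x \<in> U)
       \<and> (\<forall>x\<in>U. c x \<in> Bc (k - fst x))
       \<and> n = (\<Sum>x\<in>{x. c x \<noteq> 0}. act (k - fst x) (fst x) (c x) (snd x))}"

text \<open>Semi-free DG module: a DG module whose underlying graded module has a basis U
  (every homogeneous element is a unique finite B-linear combination of basis elements)
  with an exhaustive increasing filtration F 0 \<subseteq> F 1 \<subseteq> ... such that the differential
  maps F n into the B-span of F (n-1) (F (-1) = {}).\<close>
definition semi_free_dg_module :: "('r::comm_ring_1 \<Rightarrow> 'b::ab_group_add \<Rightarrow> 'b) \<Rightarrow> (int \<Rightarrow> 'b set)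
    \<Rightarrow> (int \<Rightarrow> int \<Rightarrow> 'b \<Rightarrow> 'b \<Rightarrow> 'b) \<Rightarrow> (int \<Rightarrow> 'b \<Rightarrow> 'b) \<Rightarrow> 'b
    \<Rightarrow> ('r \<Rightarrow> 'n::ab_group_add \<Rightarrow> 'n) \<Rightarrow> (int \<Rightarrow> 'n set)
    \<Rightarrow> (int \<Rightarrow> int \<Rightarrow> 'b \<Rightarrow> 'n \<Rightarrow> 'n) \<Rightarrow> (int \<Rightarrow> 'n \<Rightarrow> 'n) \<Rightarrow> bool" where
  "semi_free_dg_module smB Bc muB dB oneB smN Nc act dN \<longleftrightarrow>
     dg_module smB Bc muB dB oneB smN Nc act dN
   \<and> (\<exists>(U :: (int \<times> 'n) set) (F :: nat \<Rightarrow> (int \<times> 'n) set).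
        (\<forall>x\<in>U. snd x \<in> Nc (fst x))
      \<and> (\<forall>k. \<forall>n\<in>Nc k. \<exists>!c. finite {x. c x \<noteq> 0} \<and> (\<forall>x. c x \<noteq> 0 \<longrightarrow> x \<in> U)
             \<and> (\<forall>x\<in>U. c x \<in> Bc (k - fst x))
             \<and> n = (\<Sum>x\<in>{x. c x \<noteq> 0}. act (k - fst x) (fst x) (c x) (snd x)))
      \<and> mono F \<and> (\<Union>m. F m) = U
      \<and> (\<forall>m. \<forall>x\<in>F m. dN (fst x) (snd x) \<in> bcomb Bc act (\<Union>l<m. F l) (fst x - 1)))"

text \<open>B = K^R(t) \<otimes> A, with B_i identified with A_(i-1) \<oplus> A_i (pairs (a_(i-1), a_i)).\<close>
definition Bset :: "(int \<Rightarrow> 'a set) \<Rightarrow> int \<Rightarrow> ('a \<times> 'a) set" where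
  "Bset Ac i = Ac (i - 1) \<times> Ac i"

definition smB :: "('r \<Rightarrow> 'a \<Rightarrow> 'a) \<Rightarrow> 'r \<Rightarrow> 'a \<times> 'a \<Rightarrow> 'a \<times> 'a" where
  "smB sm c b = (sm c (fst b), sm c (snd b))"

definition dB :: "('r \<Rightarrow> 'a::ab_group_add \<Rightarrow> 'a) \<Rightarrow> 'r \<Rightarrow> (int \<Rightarrow> 'a \<Rightarrow> 'a) \<Rightarrow> int \<Rightarrow> 'a \<times> 'a \<Rightarrow> 'a \<times> 'a" where
  "dB sm t dA i b = (- dA (i - 1) (fst b), sm t (fst b) + dA i (snd b))"

definition muB :: "(int \<Rightarrow> int \<Rightarrow> 'a \<Rightarrow> 'a \<Rightarrow> 'a::ab_group_add) \<Rightarrow> int \<Rightarrow> int \<Rightarrow> 'a \<times> 'a \<Rightarrow> 'a \<times> 'a \<Rightarrow> 'a \<times> 'a" where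
  "muB mu i j b c = (mu (i - 1) j (fst b) (snd c) + sgnx i (mu i (j - 1) (snd b) (fst c)),
                     mu i j (snd b) (snd c))"

definition oneB :: "'a::zero \<Rightarrow> 'a \<times> 'a" where
  "oneB one = (0, one)"

text \<open>M_i = \<Oplus>_(j\<ge>0) A_j^(\<beta>_(i-j)): E is the index set of all basis elements, deg e is the degree
  of the basis element e, so \<beta>_k = |{e \<in> E. deg e = k}|. An element of M_i is a finitely supported
  family (m_e)_(e\<in>E) with m_e \<in> A_(i - deg e).\<close>
definition Mset :: "(int \<Rightarrow> 'a::zero set) \<Rightarrow> 'e set \<Rightarrow> ('e \<Rightarrow> int) \<Rightarrow> int \<Rightarrow> ('e \<Rightarrow> 'a) set" where
  "Mset Ac E deg i = {f. finite {e. f e \<noteq> 0} \<and> (\<forall>e. if e \<in> E then f e \<in> Ac (i - deg e) else f e = 0)}"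

definition smM :: "('r \<Rightarrow> 'a \<Rightarrow> 'a) \<Rightarrow> 'r \<Rightarrow> ('e \<Rightarrow> 'a) \<Rightarrow> ('e \<Rightarrow> 'a)" where
  "smM sm c m = (\<lambda>e. sm c (m e))"

definition actM :: "(int \<Rightarrow> int \<Rightarrow> 'a \<Rightarrow> 'a \<Rightarrow> 'a::zero) \<Rightarrow> 'e set \<Rightarrow> ('e \<Rightarrow> int)
    \<Rightarrow> int \<Rightarrow> int \<Rightarrow> 'a \<Rightarrow> ('e \<Rightarrow> 'a) \<Rightarrow> ('e \<Rightarrow> 'a)" where
  "actM mu E deg l j a m = (\<lambda>e. if e \<in> E then mu l (j - deg e) a (m e) else 0)"

text \<open>N_i = M_(i-1) \<oplus> M_i (pairs (m_(i-1), m_i)).\<close>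
definition Nset :: "(int \<Rightarrow> 'a::zero set) \<Rightarrow> 'e set \<Rightarrow> ('e \<Rightarrow> int) \<Rightarrow> int \<Rightarrow> (('e \<Rightarrow> 'a) \<times> ('e \<Rightarrow> 'a)) set" where
  "Nset Ac E deg i = Mset Ac E deg (i - 1) \<times> Mset Ac E deg i"

definition smN :: "('r \<Rightarrow> 'a \<Rightarrow> 'a) \<Rightarrow> 'r \<Rightarrow> ('e \<Rightarrow> 'a) \<times> ('e \<Rightarrow> 'a) \<Rightarrow> ('e \<Rightarrow> 'a) \<times> ('e \<Rightarrow> 'a)" where
  "smN sm c n = (smM sm c (fst n), smM sm c (snd n))"

text \<open>\<partial>^N_i = [[\<xi>_(i-1), \<delta>_i], [\<tau>_(i-1), \<alpha>_i]].\<close>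
definition dN :: "(int \<Rightarrow> ('e \<Rightarrow> 'a) \<Rightarrow> ('e \<Rightarrow> 'a::ab_group_add)) \<Rightarrow> (int \<Rightarrow> ('e \<Rightarrow> 'a) \<Rightarrow> ('e \<Rightarrow> 'a))
    \<Rightarrow> (int \<Rightarrow> ('e \<Rightarrow> 'a) \<Rightarrow> ('e \<Rightarrow> 'a)) \<Rightarrow> (int \<Rightarrow> ('e \<Rightarrow> 'a) \<Rightarrow> ('e \<Rightarrow> 'a))
    \<Rightarrow> int \<Rightarrow> ('e \<Rightarrow> 'a) \<times> ('e \<Rightarrow> 'a) \<Rightarrow> ('e \<Rightarrow> 'a) \<times> ('e \<Rightarrow> 'a)" where
  "dN xi tau delta alpha i n =
     (xi (i - 1) (fst n) + delta i (snd n), tau (i - 1) (fst n) + alpha i (snd n))"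

definition actN :: "(int \<Rightarrow> int \<Rightarrow> 'a \<Rightarrow> 'a \<Rightarrow> 'a::ab_group_add) \<Rightarrow> 'e set \<Rightarrow> ('e \<Rightarrow> int)
    \<Rightarrow> int \<Rightarrow> int \<Rightarrow> 'a \<times> 'a \<Rightarrow> ('e \<Rightarrow> 'a) \<times> ('e \<Rightarrow> 'a) \<Rightarrow> ('e \<Rightarrow> 'a) \<times> ('e \<Rightarrow> 'a)" where
  "actN mu E deg i j b n =
     (actM mu E deg (i - 1) j (fst b) (snd n) + sgnx i (actM mu E deg i (j - 1) (snd b) (fst n)),
      actM mu E deg i j (snd b) (snd n))"

definition N_is_dg_module where
  "N_is_dg_module sm Ac mu one dA t E deg xi tau delta alpha \<longleftrightarrow>
     dg_module (smB sm) (Bset Ac) (muB mu) (dB sm t dA) (oneB one)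
               (smN sm) (Nset Ac E deg) (actN mu E deg) (dN xi tau delta alpha)"

definition N_is_semi_free where
  "N_is_semi_free sm Ac mu one dA t E deg xi tau delta alpha \<longleftrightarrow>
     semi_free_dg_module (smB sm) (Bset Ac) (muB mu) (dB sm t dA) (oneB one)
               (smN sm) (Nset Ac E deg) (actN mu E deg) (dN xi tau delta alpha)"

end

theory Submission
  imports Defs
begin


lemma sum_fun_apply: "(\<Sum>x\<in>S. f x) (e::'e) = (\<Sum>x\<in>S. (f x) e :: 'a::comm_monoid_add)"
  by (induction S rule: infinite_finite_induct) auto

lemma sgnx_pair: "sgnx i (x, y) = (sgnx i x, sgnx i y)"
  by (simp add: sgnx_def)

definition bas :: "'a::zero \<Rightarrow> 'e \<Rightarrow> 'e \<Rightarrow> 'a" where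
  "bas one e = (\<lambda>e'. if e' = e then one else 0)"
definition ub :: "'a::zero \<Rightarrow> ('e \<Rightarrow> int) \<Rightarrow> 'e \<Rightarrow> int \<times> ('e \<Rightarrow> 'a) \<times> ('e \<Rightarrow> 'a)" where
  "ub one deg e = (deg e, (0, bas one e))"

locale dgA =
  fixes sm :: "'r::comm_ring_1 \<Rightarrow> 'a::ab_group_add \<Rightarrow> 'a"
    and Ac :: "int \<Rightarrow> 'a set"
    and mu :: "int \<Rightarrow> int \<Rightarrow> 'a \<Rightarrow> 'a \<Rightarrow> 'a"
    and one :: 'a
    and dA :: "int \<Rightarrow> 'a \<Rightarrow> 'a"
    and E :: "'e set"
    and deg :: "'e \<Rightarrow> int"
  assumes A: "comm_dg_algebra sm Ac mu one dA"
begin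

lemma sm_add: "sm c (x + y) = sm c x + sm c y"
proof -
  have "\<forall>c x y. sm c (x + y) = sm c x + sm c y" using A unfolding comm_dg_algebra_def by (elim conjE) assumption
  then show ?thesis by blast
qed
lemma sm_add2: "sm (c + c') x = sm c x + sm c' x"
proof -
  have "\<forall>c c' x. sm (c + c') x = sm c x + sm c' x" using A unfolding comm_dg_algebra_def by (elim conjE) assumption
  then show ?thesis by blast
qed
lemma sm_sm: "sm c (sm c' x) = sm (c * c') x"
proof -
  have "\<forall>c c' x. sm c (sm c' x) = sm (c * c') x" using A unfolding comm_dg_algebra_def by (elim conjE) assumption
  then show ?thesis by blast
qed
lemma sm_1: "sm 1 x = x"
proof -
  have "\<forall>x. sm 1 x = x" using A unfolding comm_dg_algebra_def by (elim conjE) assumption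
  then show ?thesis by blast
qed
lemma Ac_sub: "submod sm (Ac i)"
proof -
  have "\<forall>i. submod sm (Ac i)" using A unfolding comm_dg_algebra_def by (elim conjE) assumption
  then show ?thesis by blast
qed
lemma Ac_0[simp]: "0 \<in> Ac i" using Ac_sub[of i] unfolding submod_def by blast
lemma Ac_add[intro]: "x \<in> Ac i \<Longrightarrow> y \<in> Ac i \<Longrightarrow> x + y \<in> Ac i" using Ac_sub[of i] unfolding submod_def by blast
lemma Ac_neg[intro]: "x \<in> Ac i \<Longrightarrow> - x \<in> Ac i" using Ac_sub[of i] unfolding submod_def by blast
lemma Ac_sm[intro]: "x \<in> Ac i \<Longrightarrow> sm c x \<in> Ac i" using Ac_sub[of i] unfolding submod_def by blast
lemma Ac_neg_deg:
  assumes "i < 0"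
  shows "Ac i = {0}"
proof -
  have "\<forall>i<0. Ac i = {0}" using A unfolding comm_dg_algebra_def by (elim conjE) assumption
  then show ?thesis using assms by blast
qed
lemma one_in[simp]: "one \<in> Ac 0"
proof -
  have "one \<in> Ac 0" using A unfolding comm_dg_algebra_def by (elim conjE) assumption
  then show ?thesis by blast
qed
lemma mu_in:
  assumes "a \<in> Ac i" "b \<in> Ac j"
  shows "mu i j a b \<in> Ac (i + j)"
proof -
  have "\<forall>i j. \<forall>a\<in>Ac i. \<forall>b\<in>Ac j. mu i j a b \<in> Ac (i + j)" using A unfolding comm_dg_algebra_def by (elim conjE) assumption
  then show ?thesis using assms by blast
qed
lemma mu_in': "a \<in> Ac i \<Longrightarrow> b \<in> Ac j \<Longrightarrow> k = i + j \<Longrightarrow> mu i j a b \<in> Ac k" using mu_in by blast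
lemma mu_add_l:
  assumes "a \<in> Ac i" "a' \<in> Ac i" "b \<in> Ac j"
  shows "mu i j (a + a') b = mu i j a b + mu i j a' b"
proof -
  have "\<forall>i j. \<forall>a\<in>Ac i. \<forall>a'\<in>Ac i. \<forall>b\<in>Ac j. mu i j (a + a') b = mu i j a b + mu i j a' b" using A unfolding comm_dg_algebra_def by (elim conjE) assumption
  then show ?thesis using assms by blast
qed
lemma mu_add_r:
  assumes "a \<in> Ac i" "b \<in> Ac j" "b' \<in> Ac j"
  shows "mu i j a (b + b') = mu i j a b + mu i j a b'"
proof -
  have "\<forall>i j. \<forall>a\<in>Ac i. \<forall>b\<in>Ac j. \<forall>b'\<in>Ac j. mu i j a (b + b') = mu i j a b + mu i j a b'" using A unfolding comm_dg_algebra_def by (elim conjE) assumption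
  then show ?thesis using assms by blast
qed
lemma mu_sm_l:
  assumes "a \<in> Ac i" "b \<in> Ac j"
  shows "mu i j (sm c a) b = sm c (mu i j a b)"
proof -
  have "\<forall>i j c. \<forall>a\<in>Ac i. \<forall>b\<in>Ac j. mu i j (sm c a) b = sm c (mu i j a b) \<and> mu i j a (sm c b) = sm c (mu i j a b)" using A unfolding comm_dg_algebra_def by (elim conjE) assumption
  then show ?thesis using assms by blast
qed
lemma mu_sm_r:
  assumes "a \<in> Ac i" "b \<in> Ac j"
  shows "mu i j a (sm c b) = sm c (mu i j a b)"
proof -
  have "\<forall>i j c. \<forall>a\<in>Ac i. \<forall>b\<in>Ac j. mu i j (sm c a) b = sm c (mu i j a b) \<and> mu i j a (sm c b) = sm c (mu i j a b)" using A unfolding comm_dg_algebra_def by (elim conjE) assumption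
  then show ?thesis using assms by blast
qed
lemma mu_assoc:
  assumes "a \<in> Ac i" "b \<in> Ac j" "c \<in> Ac k"
  shows "mu (i + j) k (mu i j a b) c = mu i (j + k) a (mu j k b c)"
proof -
  have "\<forall>i j k. \<forall>a\<in>Ac i. \<forall>b\<in>Ac j. \<forall>c\<in>Ac k. mu (i + j) k (mu i j a b) c = mu i (j + k) a (mu j k b c)" using A unfolding comm_dg_algebra_def by (elim conjE) assumption
  then show ?thesis using assms by blast
qed
lemma mu_one_l:
  assumes "a \<in> Ac i"
  shows "mu 0 i one a = a"
proof -
  have "\<forall>i. \<forall>a\<in>Ac i. mu 0 i one a = a \<and> mu i 0 a one = a" using A unfolding comm_dg_algebra_def by (elim conjE) assumption
  then show ?thesis using assms by blast
qed
lemma mu_one_r: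
  assumes "a \<in> Ac i"
  shows "mu i 0 a one = a"
proof -
  have "\<forall>i. \<forall>a\<in>Ac i. mu 0 i one a = a \<and> mu i 0 a one = a" using A unfolding comm_dg_algebra_def by (elim conjE) assumption
  then show ?thesis using assms by blast
qed
lemma dA_lin: "lin_on sm sm (Ac i) (Ac (i - 1)) (dA i)"
proof -
  have "\<forall>i. lin_on sm sm (Ac i) (Ac (i - 1)) (dA i)" using A unfolding comm_dg_algebra_def by (elim conjE) assumption
  then show ?thesis by blast
qed
lemma dA_in: "a \<in> Ac i \<Longrightarrow> dA i a \<in> Ac (i - 1)" using dA_lin unfolding lin_on_def by blast
lemma dA_add: "a \<in> Ac i \<Longrightarrow> b \<in> Ac i \<Longrightarrow> dA i (a + b) = dA i a + dA i b" using dA_lin unfolding lin_on_def by blast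
lemma dA_sm: "a \<in> Ac i \<Longrightarrow> dA i (sm c a) = sm c (dA i a)" using dA_lin unfolding lin_on_def by blast

lemma sm_0[simp]: "sm c 0 = 0"
  using sm_add[of c 0 0] by simp
lemma sm_neg: "sm c (- x) = - sm c x"
proof -
  have "sm c x + sm c (- x) = 0" using sm_add[of c x "-x"] by simp
  then show ?thesis by (simp add: eq_neg_iff_add_eq_0 add.commute)
qed
lemma mu_0_l[simp]: "b \<in> Ac j \<Longrightarrow> mu i j 0 b = 0"
  using mu_add_l[of 0 i 0 b j] by simp
lemma mu_0_r[simp]: "a \<in> Ac i \<Longrightarrow> mu i j a 0 = 0"
  using mu_add_r[of a i 0 j 0] by simp
lemma mu_neg_l: "a \<in> Ac i \<Longrightarrow> b \<in> Ac j \<Longrightarrow> mu i j (- a) b = - mu i j a b"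
proof -
  assume h: "a \<in> Ac i" "b \<in> Ac j"
  have "mu i j a b + mu i j (- a) b = 0" using mu_add_l[of a i "-a" b j] h by (simp add: Ac_neg)
  then show ?thesis by (simp add: eq_neg_iff_add_eq_0 add.commute)
qed
lemma mu_neg_r: "a \<in> Ac i \<Longrightarrow> b \<in> Ac j \<Longrightarrow> mu i j a (- b) = - mu i j a b"
proof -
  assume h: "a \<in> Ac i" "b \<in> Ac j"
  have "mu i j a b + mu i j a (- b) = 0" using mu_add_r[of a i b j "-b"] h by (simp add: Ac_neg)
  then show ?thesis by (simp add: eq_neg_iff_add_eq_0 add.commute)
qed
lemma dA_0[simp]: "dA i 0 = 0" using dA_add[of 0 i 0] by simp
lemma dA_neg: "a \<in> Ac i \<Longrightarrow> dA i (- a) = - dA i a"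
proof -
  assume h: "a \<in> Ac i" 
  have "dA i a + dA i (- a) = 0" using dA_add[of a i "-a"] h by (simp add: Ac_neg)
  then show ?thesis by (simp add: eq_neg_iff_add_eq_0 add.commute)
qed

lemma Ac_negdeg_eq: "i < 0 \<Longrightarrow> x \<in> Ac i \<Longrightarrow> x = 0" using Ac_neg_deg by blast

abbreviation "M \<equiv> Mset Ac E deg"
abbreviation "aM \<equiv> actM mu E deg"

lemma M_E: "m \<in> M i \<Longrightarrow> e \<in> E \<Longrightarrow> m e \<in> Ac (i - deg e)"
  unfolding Mset_def by (metis (mono_tags, lifting) mem_Collect_eq)
lemma M_nE: "m \<in> M i \<Longrightarrow> e \<notin> E \<Longrightarrow> m e = 0"
  unfolding Mset_def by (metis (mono_tags, lifting) mem_Collect_eq)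
lemma M_fin: "m \<in> M i \<Longrightarrow> finite {e. m e \<noteq> 0}"
  unfolding Mset_def by blast
lemma M_I: "finite {e. m e \<noteq> 0} \<Longrightarrow> (\<And>e. e \<in> E \<Longrightarrow> m e \<in> Ac (i - deg e)) \<Longrightarrow> (\<And>e. e \<notin> E \<Longrightarrow> m e = 0) \<Longrightarrow> m \<in> M i"
  unfolding Mset_def by auto

lemma M_0[simp]: "0 \<in> M i"
  by (rule M_I) auto
lemma M_add[intro]: assumes "x \<in> M i" "y \<in> M i" shows "x + y \<in> M i"
proof (rule M_I)
  have "{e. (x + y) e \<noteq> 0} \<subseteq> {e. x e \<noteq> 0} \<union> {e. y e \<noteq> 0}" by auto
  then show "finite {e. (x + y) e \<noteq> 0}" using M_fin[OF assms(1)] M_fin[OF assms(2)] finite_subset by blast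
next
  fix e assume "e \<in> E" then show "(x + y) e \<in> Ac (i - deg e)" using assms by (simp add: Ac_add M_E)
qed (use assms in \<open>auto simp: M_nE\<close>)
lemma M_neg[intro]: assumes "x \<in> M i" shows "- x \<in> M i"
proof (rule M_I)
  show "finite {e. (- x) e \<noteq> 0}" using M_fin[OF assms] by simp
next
  fix e assume "e \<in> E" then show "(- x) e \<in> Ac (i - deg e)" using assms by (simp add: Ac_neg M_E)
qed (use assms in \<open>auto simp: M_nE\<close>)
lemma M_diff[intro]: "x \<in> M i \<Longrightarrow> y \<in> M i \<Longrightarrow> x - y \<in> M i"
  using M_add M_neg by (metis diff_conv_add_uminus)
lemma M_sm[intro]: assumes "x \<in> M i" shows "smM sm c x \<in> M i"
proof (rule M_I)
  have "{e. smM sm c x e \<noteq> 0} \<subseteq> {e. x e \<noteq> 0}" by (auto simp: smM_def)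
  then show "finite {e. smM sm c x e \<noteq> 0}" using M_fin[OF assms] finite_subset by blast
next
  fix e assume "e \<in> E" then show "smM sm c x e \<in> Ac (i - deg e)" using assms by (simp add: smM_def Ac_sm M_E)
qed (use assms in \<open>auto simp: smM_def M_nE\<close>)

lemma smM_add: "smM sm c (x + y) = smM sm c x + smM sm c y"
  by (auto simp: smM_def sm_add)
lemma smM_neg: "smM sm c (- x) = - smM sm c x"
  by (auto simp: smM_def sm_neg)
lemma smM_0[simp]: "smM sm c 0 = 0"
  by (auto simp: smM_def)
lemma smM_diff: "smM sm c (x - y) = smM sm c x - smM sm c y"
  by (metis diff_conv_add_uminus smM_add smM_neg)

lemma actM_in: assumes "a \<in> Ac l" "m \<in> M j" "k = l + j" shows "aM l j a m \<in> M k"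
proof (rule M_I)
  have "{e. aM l j a m e \<noteq> 0} \<subseteq> {e. m e \<noteq> 0}" using assms(1) by (auto simp: actM_def)
  then show "finite {e. aM l j a m e \<noteq> 0}" using M_fin[OF assms(2)] finite_subset by blast
next
  fix e assume "e \<in> E"
  then show "aM l j a m e \<in> Ac (k - deg e)"
    using mu_in'[OF assms(1) M_E[OF assms(2) \<open>e \<in> E\<close>], of "k - deg e"] assms(3) by (simp add: actM_def)
qed (simp add: actM_def)

lemma actM_add_l: "a \<in> Ac l \<Longrightarrow> a' \<in> Ac l \<Longrightarrow> m \<in> M j \<Longrightarrow> aM l j (a + a') m = aM l j a m + aM l j a' m"
  by (auto simp: actM_def fun_eq_iff mu_add_l M_E)
lemma actM_add_r: "a \<in> Ac l \<Longrightarrow> m \<in> M j \<Longrightarrow> m' \<in> M j \<Longrightarrow> aM l j a (m + m') = aM l j a m + aM l j a m'"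
  by (auto simp: actM_def fun_eq_iff mu_add_r M_E)
lemma actM_neg_l: "a \<in> Ac l \<Longrightarrow> m \<in> M j \<Longrightarrow> aM l j (- a) m = - aM l j a m"
  by (auto simp: actM_def fun_eq_iff mu_neg_l M_E)
lemma actM_neg_r: "a \<in> Ac l \<Longrightarrow> m \<in> M j \<Longrightarrow> aM l j a (- m) = - aM l j a m"
  by (auto simp: actM_def fun_eq_iff mu_neg_r M_E)
lemma actM_0_l[simp]: "m \<in> M j \<Longrightarrow> aM l j 0 m = 0"
  by (auto simp: actM_def fun_eq_iff M_E)
lemma actM_0_r[simp]: "a \<in> Ac l \<Longrightarrow> aM l j a 0 = 0"
  by (auto simp: actM_def fun_eq_iff)
lemma actM_sm_l: "a \<in> Ac l \<Longrightarrow> m \<in> M j \<Longrightarrow> aM l j (sm c a) m = smM sm c (aM l j a m)"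
  by (auto simp: actM_def smM_def fun_eq_iff mu_sm_l M_E)
lemma actM_sm_r: "a \<in> Ac l \<Longrightarrow> m \<in> M j \<Longrightarrow> aM l j a (smM sm c m) = smM sm c (aM l j a m)"
  by (auto simp: actM_def smM_def fun_eq_iff mu_sm_r M_E)
lemma actM_one: "m \<in> M j \<Longrightarrow> aM 0 j one m = m"
  by (auto simp: actM_def fun_eq_iff mu_one_l M_E M_nE)
lemma actM_assoc:
  assumes "a \<in> Ac l" "c \<in> Ac l'" "m \<in> M j" "p = l + l'" "q = l' + j"
  shows "aM p j (mu l l' a c) m = aM l q a (aM l' j c m)"
proof (rule ext)
  fix e
  show "aM p j (mu l l' a c) m e = aM l q a (aM l' j c m) e"
  proof (cases "e \<in> E")
    case True
    have "aM p j (mu l l' a c) m e = mu (l+l') (j - deg e) (mu l l' a c) (m e)" using True assms(4) by (simp add: actM_def)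
    also have "... = mu l (l' + (j - deg e)) a (mu l' (j - deg e) c (m e))" by (rule mu_assoc[OF assms(1,2) M_E[OF assms(3) True]])
    also have "l' + (j - deg e) = q - deg e" using assms(5) by simp
    also have "mu l (q - deg e) a (mu l' (j - deg e) c (m e)) = aM l q a (aM l' j c m) e" using True by (simp add: actM_def)
    finally show ?thesis .
  qed (simp add: actM_def)
qed


lemma sgnx_sgnx[simp]: "sgnx i (sgnx i (x::'x::group_add)) = x"
  by (simp add: sgnx_def)
lemma sgnx_add: "sgnx i ((x::'x::ab_group_add) + y) = sgnx i x + sgnx i y"
  by (simp add: sgnx_def)
lemma sgnx_0[simp]: "sgnx i (0::'x::group_add) = 0"
  by (simp add: sgnx_def)
lemma M_sgnx[intro]: "x \<in> M i \<Longrightarrow> sgnx k x \<in> M i"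
  by (auto simp: sgnx_def)

context
  fixes f :: "('e \<Rightarrow> 'a) \<Rightarrow> ('e \<Rightarrow> 'a)" and i k :: int
  assumes f: "lin_on (smM sm) (smM sm) (M i) (M k) f"
begin
lemma lin_in: "x \<in> M i \<Longrightarrow> f x \<in> M k" using f unfolding lin_on_def by blast
lemma lin_add: "x \<in> M i \<Longrightarrow> y \<in> M i \<Longrightarrow> f (x + y) = f x + f y" using f unfolding lin_on_def by blast
lemma lin_sm: "x \<in> M i \<Longrightarrow> f (smM sm c x) = smM sm c (f x)" using f unfolding lin_on_def by blast
lemma lin_0: "f 0 = 0" using lin_add[of 0 0] by simp
lemma lin_neg: assumes "x \<in> M i" shows "f (- x) = - f x"
proof -
  have "f x + f (- x) = 0" using lin_add[of x "-x"] assms lin_0 by auto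
  then show ?thesis by (simp add: eq_neg_iff_add_eq_0 add.commute)
qed
lemma lin_diff: "x \<in> M i \<Longrightarrow> y \<in> M i \<Longrightarrow> f (x - y) = f x - f y"
  using lin_add[of x "- y"] lin_neg[of y] by (simp add: M_neg)
lemma lin_sgnx: "x \<in> M i \<Longrightarrow> f (sgnx l x) = sgnx l (f x)"
  by (simp add: sgnx_def lin_neg)
end


abbreviation "U \<equiv> ub one deg ` E"
abbreviation "validc k c \<equiv> finite {x. c x \<noteq> 0} \<and> (\<forall>x. c x \<noteq> 0 \<longrightarrow> x \<in> U) \<and> (\<forall>x\<in>U. c x \<in> Bset Ac (k - fst x))"
abbreviation "sumc k c \<equiv> (\<Sum>x\<in>{x. c x \<noteq> 0}. actN mu E deg (k - fst x) (fst x) (c x) (snd x))"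

lemma bas_in: "e \<in> E \<Longrightarrow> bas one e \<in> M (deg e)"
proof (rule M_I)
  have "{e'. bas one e e' \<noteq> 0} \<subseteq> {e}" by (auto simp: bas_def)
  then show "finite {e'. bas one e e' \<noteq> 0}" using finite_subset by blast
qed (auto simp: bas_def)

lemma term_eq:
  assumes e': "e' \<in> E" and a: "a \<in> Ac (l - 1)" and b: "b \<in> Ac l"
  shows "actN mu E deg l (deg e') (a, b) (0, bas one e') = (\<lambda>e. if e = e' then a else 0, \<lambda>e. if e = e' then b else 0)"
proof -
  have "aM l' (deg e') x (bas one e') = (\<lambda>e. if e = e' then x else 0)" if "x \<in> Ac l'" for x l'
  proof
    fix e show "aM l' (deg e') x (bas one e') e = (if e = e' then x else 0)"
      using that e' by (auto simp: actM_def bas_def mu_one_r)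
  qed
  then show ?thesis using a b by (simp add: actN_def)
qed

lemma Bset_neg: "k < 0 \<Longrightarrow> y \<in> Bset Ac k \<Longrightarrow> y = 0"
  using Ac_neg_deg[of k] Ac_neg_deg[of "k - 1"] by (auto simp: Bset_def zero_prod_def)

lemma sum_formula:
  assumes one: "one \<noteq> 0" and v: "validc k c"
  shows "sumc k c = (\<lambda>e. if e \<in> E then fst (c (ub one deg e)) else 0, \<lambda>e. if e \<in> E then snd (c (ub one deg e)) else 0)"
proof -
  let ?S = "{x. c x \<noteq> 0}"
  have inj: "e1 = e2" if "ub one deg e1 = ub one deg e2" for e1 e2
  proof -
    have "bas one e1 e1 = bas one e2 e1" using that by (simp add: ub_def)
    then show ?thesis using one by (auto simp: bas_def split: if_splits)
  qed
  have tm: "actN mu E deg (k - fst x) (fst x) (c x) (snd x)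
      = (\<lambda>e. if e \<in> E \<and> x = ub one deg e then fst (c x) else 0, \<lambda>e. if e \<in> E \<and> x = ub one deg e then snd (c x) else 0)"
    if "x \<in> ?S" for x
  proof -
    have "x \<in> U" using that v by blast
    then obtain e' where e': "e' \<in> E" "x = ub one deg e'" by blast
    have cx: "c x \<in> Bset Ac (k - deg e')" using v e' by (auto simp: ub_def)
    have "actN mu E deg (k - deg e') (deg e') (fst (c x), snd (c x)) (0, bas one e')
        = (\<lambda>e. if e = e' then fst (c x) else 0, \<lambda>e. if e = e' then snd (c x) else 0)"
      by (rule term_eq) (use cx e' in \<open>auto simp: Bset_def\<close>)
    moreover have "(e \<in> E \<and> x = ub one deg e) = (e = e')" for e using e' inj by auto
    ultimately show ?thesis using e' by (simp add: ub_def)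
  qed
  have fin: "finite ?S" using v by blast
  have "sumc k c = (\<Sum>x\<in>?S. (\<lambda>e. if e \<in> E \<and> x = ub one deg e then fst (c x) else 0, \<lambda>e. if e \<in> E \<and> x = ub one deg e then snd (c x) else 0))"
    by (rule sum.cong) (auto simp: tm)
  also have "... = (\<lambda>e. if e \<in> E then fst (c (ub one deg e)) else 0, \<lambda>e. if e \<in> E then snd (c (ub one deg e)) else 0)"
  proof -
    have "(\<Sum>x\<in>?S. (\<lambda>e. if e \<in> E \<and> x = ub one deg e then h x else 0)) = (\<lambda>e. if e \<in> E then h (ub one deg e) else 0)"
      if h0: "\<And>x. c x = 0 \<Longrightarrow> h x = 0" for h :: "_ \<Rightarrow> 'a"
    proof
      fix e
      show "(\<Sum>x\<in>?S. (\<lambda>e. if e \<in> E \<and> x = ub one deg e then h x else 0)) e = (if e \<in> E then h (ub one deg e) else 0)"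
        unfolding sum_fun_apply using fin h0 by (auto simp: sum.delta')
    qed
    then show ?thesis by (simp add: sum_prod)
  qed
  finally show ?thesis .
qed


lemma ub_inj: "one \<noteq> 0 \<Longrightarrow> inj_on (ub one deg) E"
proof (rule inj_onI)
  fix e1 e2 assume one: "one \<noteq> 0" and "ub one deg e1 = ub one deg e2"
  then have "bas one e1 e1 = bas one e2 e1" by (simp add: ub_def)
  then show "e1 = e2" using one by (auto simp: bas_def split: if_splits)
qed

lemma triv_Ac: "one = 0 \<Longrightarrow> a \<in> Ac i \<Longrightarrow> a = 0"
  using mu_one_r[of a i] by simp

lemma triv_M: assumes "one = 0" "m \<in> M i" shows "m = 0"
proof
  fix e show "m e = 0 e"
    using assms triv_Ac[OF assms(1) M_E[OF assms(2)]] M_nE[OF assms(2)] by (cases "e \<in> E") auto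
qed

lemma triv_valid: assumes "one = 0" "validc k c" shows "c = (\<lambda>_. 0)"
proof
  fix x show "c x = 0"
  proof (rule ccontr)
    assume "c x \<noteq> 0"
    then have "x \<in> U" using assms by blast
    then have "c x \<in> Bset Ac (k - fst x)" using assms by blast
    then show False using \<open>c x \<noteq> 0\<close> triv_Ac[OF assms(1)] by (auto simp: Bset_def zero_prod_def)
  qed
qed

lemma decomp:
  assumes n: "n \<in> Nset Ac E deg k"
  shows "\<exists>!c. finite {x. c x \<noteq> 0} \<and> (\<forall>x. c x \<noteq> 0 \<longrightarrow> x \<in> U) \<and> (\<forall>x\<in>U. c x \<in> Bset Ac (k - fst x))
             \<and> n = sumc k c"
proof (cases "one = 0")
  case True
  have n0: "n = 0" using n triv_M[OF True] by (auto simp: Nset_def zero_prod_def)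
  show ?thesis
  proof (rule ex1I[of _ "\<lambda>_. 0"])
    show "finite {x. (\<lambda>_. 0::'a \<times> 'a) x \<noteq> 0} \<and> (\<forall>x. (\<lambda>_. 0::'a \<times> 'a) x \<noteq> 0 \<longrightarrow> x \<in> U) \<and> (\<forall>x\<in>U. (\<lambda>_. 0::'a \<times> 'a) x \<in> Bset Ac (k - fst x))
             \<and> n = sumc k (\<lambda>_. 0)"
      using n0 by (auto simp: Bset_def zero_prod_def)
  next
    fix c assume "finite {x. c x \<noteq> 0} \<and> (\<forall>x. c x \<noteq> 0 \<longrightarrow> x \<in> U) \<and> (\<forall>x\<in>U. c x \<in> Bset Ac (k - fst x)) \<and> n = sumc k c"
    then show "c = (\<lambda>_. 0)" using triv_valid[OF True] by blast
  qed
next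
  case False
  have inj: "inj_on (ub one deg) E" using ub_inj[OF False] .
  define c0 where "c0 x = (if x \<in> U then (fst n (the_inv_into E (ub one deg) x), snd n (the_inv_into E (ub one deg) x)) else 0)" for x
  have c0ub: "c0 (ub one deg e) = (fst n e, snd n e)" if "e \<in> E" for e
    using that inj by (simp add: c0_def the_inv_into_f_f)
  have fn: "fst n \<in> M (k - 1)" and sn: "snd n \<in> M k" using n by (auto simp: Nset_def)
  have v: "validc k c0"
  proof (intro conjI)
    have "{x. c0 x \<noteq> 0} \<subseteq> ub one deg ` ({e. fst n e \<noteq> 0} \<union> {e. snd n e \<noteq> 0})"
    proof
      fix x assume "x \<in> {x. c0 x \<noteq> 0}"
      then have x: "x \<in> U" "c0 x \<noteq> 0" by (auto simp: c0_def split: if_splits)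
      then obtain e where "e \<in> E" "x = ub one deg e" by blast
      then show "x \<in> ub one deg ` ({e. fst n e \<noteq> 0} \<union> {e. snd n e \<noteq> 0})"
        using x c0ub by (auto simp: zero_prod_def)
    qed
    then show "finite {x. c0 x \<noteq> 0}" using M_fin[OF fn] M_fin[OF sn] finite_subset by blast
    show "\<forall>x. c0 x \<noteq> 0 \<longrightarrow> x \<in> U" by (auto simp: c0_def)
    show "\<forall>x\<in>U. c0 x \<in> Bset Ac (k - fst x)"
    proof
      fix x assume "x \<in> U"
      then obtain e where e: "e \<in> E" "x = ub one deg e" by blast
      have "fst n e \<in> Ac (k - 1 - deg e)" "snd n e \<in> Ac (k - deg e)" using M_E[OF fn e(1)] M_E[OF sn e(1)] by auto
      then show "c0 x \<in> Bset Ac (k - fst x)" using e c0ub by (simp add: Bset_def ub_def algebra_simps)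
    qed
  qed
  have s0: "n = sumc k c0"
  proof -
    have "sumc k c0 = (\<lambda>e. if e \<in> E then fst n e else 0, \<lambda>e. if e \<in> E then snd n e else 0)"
      using sum_formula[OF False v] c0ub by (simp add: fun_eq_iff)
    also have "... = n" using M_nE[OF fn] M_nE[OF sn] by (auto simp: prod_eq_iff fun_eq_iff)
    finally show ?thesis by simp
  qed
  show ?thesis
  proof (rule ex1I[of _ c0])
    show "finite {x. c0 x \<noteq> 0} \<and> (\<forall>x. c0 x \<noteq> 0 \<longrightarrow> x \<in> U) \<and> (\<forall>x\<in>U. c0 x \<in> Bset Ac (k - fst x)) \<and> n = sumc k c0"
      using v s0 by blast
  next
    fix c assume h: "finite {x. c x \<noteq> 0} \<and> (\<forall>x. c x \<noteq> 0 \<longrightarrow> x \<in> U) \<and> (\<forall>x\<in>U. c x \<in> Bset Ac (k - fst x)) \<and> n = sumc k c"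
    then have vc: "validc k c" by blast
    have sf: "n = (\<lambda>e. if e \<in> E then fst (c (ub one deg e)) else 0, \<lambda>e. if e \<in> E then snd (c (ub one deg e)) else 0)"
      using h sum_formula[OF False vc] by simp
    show "c = c0"
    proof
      fix x show "c x = c0 x"
      proof (cases "x \<in> U")
        case True
        then obtain e where e: "e \<in> E" "x = ub one deg e" by blast
        have "fst n e = fst (c (ub one deg e))" "snd n e = snd (c (ub one deg e))"
          using e(1) arg_cong[OF sf, of "\<lambda>p. fst p e"] arg_cong[OF sf, of "\<lambda>p. snd p e"] by auto
        then have "c (ub one deg e) = (fst n e, snd n e)" by simp
        then show ?thesis using e c0ub[OF e(1)] by simp
      next
        case False
        then have "c x = 0" using vc by blast
        then show ?thesis using False by (simp add: c0_def)
      qed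
    qed
  qed
qed

end

locale dgN = dgA sm Ac mu one dA E deg
  for sm :: "'r::comm_ring_1 \<Rightarrow> 'a::ab_group_add \<Rightarrow> 'a"
    and Ac mu one dA and E :: "'e set" and deg +
  fixes t :: 'r and xi tau delta alpha :: "int \<Rightarrow> ('e \<Rightarrow> 'a) \<Rightarrow> ('e \<Rightarrow> 'a)"
  assumes xi_lin: "\<forall>i. lin_on (smM sm) (smM sm) (Mset Ac E deg i) (Mset Ac E deg (i - 1)) (xi i)"
    and tau_lin: "\<forall>i. lin_on (smM sm) (smM sm) (Mset Ac E deg i) (Mset Ac E deg i) (tau i)"
    and delta_lin: "\<forall>i. lin_on (smM sm) (smM sm) (Mset Ac E deg i) (Mset Ac E deg (i - 2)) (delta i)"
    and alpha_lin: "\<forall>i. lin_on (smM sm) (smM sm) (Mset Ac E deg i) (Mset Ac E deg (i - 1)) (alpha i)"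
begin

lemma xiL: "lin_on (smM sm) (smM sm) (M i) (M (i - 1)) (xi i)" using xi_lin by blast
lemma tauL: "lin_on (smM sm) (smM sm) (M i) (M i) (tau i)" using tau_lin by blast
lemma deltaL: "lin_on (smM sm) (smM sm) (M i) (M (i - 2)) (delta i)" using delta_lin by blast
lemma alphaL: "lin_on (smM sm) (smM sm) (M i) (M (i - 1)) (alpha i)" using alpha_lin by blast

lemmas xi_in = lin_in[OF xiL] and tau_in = lin_in[OF tauL] and delta_in = lin_in[OF deltaL] and alpha_in = lin_in[OF alphaL]
lemmas lin0[simp] = lin_0[OF xiL] lin_0[OF tauL] lin_0[OF deltaL] lin_0[OF alphaL]

abbreviation "DG \<equiv> N_is_dg_module sm Ac mu one dA t E deg xi tau delta alpha"

lemma DG_dd: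
  assumes DG "n \<in> Nset Ac E deg i"
  shows "dN xi tau delta alpha (i - 1) (dN xi tau delta alpha i n) = 0"
proof -
  have "\<forall>i. \<forall>n\<in>Nset Ac E deg i. dN xi tau delta alpha (i - 1) (dN xi tau delta alpha i n) = 0"
    using assms(1) unfolding N_is_dg_module_def dg_module_def by (elim conjE) assumption
  then show ?thesis using assms(2) by blast
qed

lemma DG_leib:
  assumes DG "b \<in> Bset Ac i" "n \<in> Nset Ac E deg j"
  shows "dN xi tau delta alpha (i + j) (actN mu E deg i j b n)
          = actN mu E deg (i - 1) j (dB sm t dA i b) n + sgnx i (actN mu E deg i (j - 1) b (dN xi tau delta alpha j n))"
proof -
  have "\<forall>i j. \<forall>b\<in>Bset Ac i. \<forall>n\<in>Nset Ac E deg j. dN xi tau delta alpha (i + j) (actN mu E deg i j b n)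
          = actN mu E deg (i - 1) j (dB sm t dA i b) n + sgnx i (actN mu E deg i (j - 1) b (dN xi tau delta alpha j n))"
    using assms(1) unfolding N_is_dg_module_def dg_module_def by (elim conjE) assumption
  then show ?thesis using assms(2,3) by blast
qed

lemma DG_fact1:
  assumes DG "m \<in> M i"
  shows "xi i m = - alpha i m \<and> tau i m = smM sm t m"
proof -
  have b: "(one, 0) \<in> Bset Ac 1" by (simp add: Bset_def)
  have n: "(0, m) \<in> Nset Ac E deg i" using assms by (simp add: Nset_def)
  have dA0: "dA 0 one = 0" using dA_in[OF one_in] Ac_neg_deg[of "0 - 1"] by simp
  have am: "alpha i m \<in> M (i - 1)" and dm: "delta i m \<in> M (i - 2)" using assms alpha_in delta_in by auto
  have "dN xi tau delta alpha (1 + i) (actN mu E deg 1 i (one, 0) (0, m))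
          = actN mu E deg (1 - 1) i (dB sm t dA 1 (one, 0)) (0, m) + sgnx 1 (actN mu E deg 1 (i - 1) (one, 0) (dN xi tau delta alpha i (0, m)))"
    using DG_leib[OF assms(1) b n] by simp
  then have "(xi i m, tau i m) = (0, smM sm t m) + (- alpha i m, 0)"
    using assms am dm dA0 by (simp add: actN_def dN_def dB_def actM_one actM_sm_l sgnx_def)
  then show ?thesis by simp
qed

lemma DG_fact2:
  assumes DG "m \<in> M i"
  shows "alpha (i - 1) (alpha i m) = - smM sm t (delta i m) \<and> delta (i - 1) (alpha i m) = alpha (i - 2) (delta i m)"
proof -
  have n: "(0, m) \<in> Nset Ac E deg i" using assms by (simp add: Nset_def)
  have am: "alpha i m \<in> M (i - 1)" and dm: "delta i m \<in> M (i - 2)" using assms alpha_in delta_in by auto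
  have f: "xi (i - 2) (delta i m) = - alpha (i - 2) (delta i m) \<and> tau (i - 2) (delta i m) = smM sm t (delta i m)"
    using DG_fact1[OF assms(1) dm] .
  have "dN xi tau delta alpha (i - 1) (dN xi tau delta alpha i (0, m)) = 0" using DG_dd[OF assms(1) n] .
  then have "(- alpha (i - 2) (delta i m) + delta (i - 1) (alpha i m), smM sm t (delta i m) + alpha (i - 1) (alpha i m)) = 0"
    using f by (simp add: dN_def)
  then show ?thesis
    by (simp add: zero_prod_def eq_neg_iff_add_eq_0 add.commute neg_eq_iff_add_eq_0)
qed

lemma DG_fact3:
  assumes DG "g \<in> Ac i" "m \<in> M j"
  shows "delta (i + j) (aM i j g m) = aM i (j - 2) g (delta j m)
       \<and> alpha (i + j) (aM i j g m) = aM (i - 1) j (dA i g) m + sgnx i (aM i (j - 1) g (alpha j m))"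
proof -
  have b: "(0, g) \<in> Bset Ac i" using assms by (simp add: Bset_def)
  have n: "(0, m) \<in> Nset Ac E deg j" using assms by (simp add: Nset_def)
  have am: "alpha j m \<in> M (j - 1)" and dm: "delta j m \<in> M (j - 2)" using assms alpha_in delta_in by auto
  have dg: "dA i g \<in> Ac (i - 1)" using dA_in[OF assms(2)] .
  have "dN xi tau delta alpha (i + j) (actN mu E deg i j (0, g) (0, m))
          = actN mu E deg (i - 1) j (dB sm t dA i (0, g)) (0, m) + sgnx i (actN mu E deg i (j - 1) (0, g) (dN xi tau delta alpha j (0, m)))"
    using DG_leib[OF assms(1) b n] .
  then have "(delta (i + j) (aM i j g m), alpha (i + j) (aM i j g m))
     = (0, aM (i - 1) j (dA i g) m) + (aM i (j - 2) g (delta j m), sgnx i (aM i (j - 1) g (alpha j m)))"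
    using assms am dm dg by (simp add: actN_def dN_def dB_def sgnx_pair)
  then show ?thesis by simp
qed

lemma smM_sgnx: "smM sm c (sgnx k x) = sgnx k (smM sm c x)"
  by (simp add: sgnx_def smM_neg)

lemma ext_da:
  assumes fb: "graded_free_basis sm Ac r gam"
    and H5: "\<forall>i j. \<forall>s\<in>{1..r i}. \<forall>m\<in>M j. delta (i + j) (aM i j (gam i s) m) = aM i (j - 2) (gam i s) (delta j m)"
    and H6: "\<forall>i j. \<forall>s\<in>{1..r i}. \<forall>m\<in>M j. alpha (i + j) (aM i j (gam i s) m)
                    = aM (i - 1) j (dA i (gam i s)) m + sgnx i (aM i (j - 1) (gam i s) (alpha j m))"
    and a: "a \<in> Ac i" and m: "m \<in> M j"
  shows "delta (i + j) (aM i j a m) = aM i (j - 2) a (delta j m)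
       \<and> alpha (i + j) (aM i j a m) = aM (i - 1) j (dA i a) m + sgnx i (aM i (j - 1) a (alpha j m))"
proof -
  obtain c where c: "a = (\<Sum>s=1..r i. sm (c s) (gam i s))"
    using fb a unfolding graded_free_basis_def by blast
  have gin: "\<And>s. s \<in> {1..r i} \<Longrightarrow> gam i s \<in> Ac i" using fb unfolding graded_free_basis_def by blast
  have am: "alpha j m \<in> M (j - 1)" and dm: "delta j m \<in> M (j - 2)" using m alpha_in delta_in by auto
  have "(\<Sum>s\<in>S. sm (c s) (gam i s)) \<in> Ac i
      \<and> delta (i + j) (aM i j (\<Sum>s\<in>S. sm (c s) (gam i s)) m) = aM i (j - 2) (\<Sum>s\<in>S. sm (c s) (gam i s)) (delta j m)
      \<and> alpha (i + j) (aM i j (\<Sum>s\<in>S. sm (c s) (gam i s)) m)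
          = aM (i - 1) j (dA i (\<Sum>s\<in>S. sm (c s) (gam i s))) m + sgnx i (aM i (j - 1) (\<Sum>s\<in>S. sm (c s) (gam i s)) (alpha j m))" if "finite S" "S \<subseteq> {1..r i}" for S :: "nat set"
    using that
  proof (induction S rule: finite_induct)
    case empty
    show ?case using m am dm by (simp flip: zero_fun_def)
  next
    case (insert x S)
    define aS where "aS = (\<Sum>s\<in>S. sm (c s) (gam i s))"
    define g where "g = gam i x"
    have IH: "aS \<in> Ac i" "delta (i + j) (aM i j aS m) = aM i (j - 2) aS (delta j m)"
      "alpha (i + j) (aM i j aS m) = aM (i - 1) j (dA i aS) m + sgnx i (aM i (j - 1) aS (alpha j m))"
      using insert unfolding aS_def by auto
    have g: "g \<in> Ac i" using insert gin unfolding g_def by auto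
    have x: "x \<in> {1..r i}" using insert by auto
    have Hd: "delta (i + j) (aM i j g m) = aM i (j - 2) g (delta j m)" using H5 x m unfolding g_def by blast
    have Ha: "alpha (i + j) (aM i j g m) = aM (i - 1) j (dA i g) m + sgnx i (aM i (j - 1) g (alpha j m))"
      using H6 x m unfolding g_def by blast
    have sg: "sm (c x) g \<in> Ac i" using g by blast
    have mem1: "aM i j g m \<in> M (i + j)" "aM i j aS m \<in> M (i + j)" "aM i j (sm (c x) g) m \<in> M (i + j)"
      using actM_in g IH(1) sg m by auto
    have mem2: "aM (i - 1) j (dA i g) m \<in> M (i + j - 1)" "aM i (j - 1) g (alpha j m) \<in> M (i + j - 1)"
      using actM_in[OF dA_in[OF g] m, of "i + j - 1"] actM_in[OF g am, of "i + j - 1"] by auto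
    have sum: "(\<Sum>s\<in>insert x S. sm (c s) (gam i s)) = sm (c x) g + aS"
      using insert unfolding aS_def g_def by simp
    have d1: "delta (i + j) (aM i j (sm (c x) g + aS) m) = aM i (j - 2) (sm (c x) g + aS) (delta j m)"
      using g IH sg m dm mem1
      by (simp add: actM_add_l actM_sm_l lin_add[OF deltaL] lin_sm[OF deltaL] Hd)
    have a1: "alpha (i + j) (aM i j (sm (c x) g + aS) m)
       = aM (i - 1) j (dA i (sm (c x) g + aS)) m + sgnx i (aM i (j - 1) (sm (c x) g + aS) (alpha j m))"
      using g IH sg m am mem1 mem2 dA_in[OF g] dA_in[OF IH(1)] Ac_sm[OF dA_in[OF g]]
      by (simp add: actM_add_l actM_sm_l lin_add[OF alphaL] lin_sm[OF alphaL] Ha dA_add dA_sm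
          smM_add smM_sgnx sgnx_add algebra_simps)
    show ?case unfolding sum using d1 a1 sg IH(1) by blast
  qed
  from this[of "{1..r i}"] show ?thesis using c by simp
qed

lemma actM_in'[simp]: "a \<in> Ac l \<Longrightarrow> m \<in> M j \<Longrightarrow> k = l + j \<Longrightarrow> aM l j a m \<in> M k"
  using actM_in by blast
lemma alpha_in'[simp]: "x \<in> M i \<Longrightarrow> k = i - 1 \<Longrightarrow> alpha i x \<in> M k" using alpha_in by blast
lemma delta_in'[simp]: "x \<in> M i \<Longrightarrow> k = i - 2 \<Longrightarrow> delta i x \<in> M k" using delta_in by blast
lemma dA_in'[simp]: "a \<in> Ac i \<Longrightarrow> k = i - 1 \<Longrightarrow> dA i a \<in> Ac k" using dA_in by blast
lemma Ac_add'[simp]: "x \<in> Ac i \<Longrightarrow> y \<in> Ac i \<Longrightarrow> x + y \<in> Ac i" by blast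
lemma Ac_neg'[simp]: "x \<in> Ac i \<Longrightarrow> - x \<in> Ac i" by blast
lemma Ac_sm'[simp]: "x \<in> Ac i \<Longrightarrow> sm c x \<in> Ac i" by blast
lemma Ac_sgnx'[simp]: "x \<in> Ac i \<Longrightarrow> sgnx k x \<in> Ac i" by (simp add: sgnx_def)
lemma mu_in''[simp]: "a \<in> Ac i \<Longrightarrow> b \<in> Ac j \<Longrightarrow> k = i + j \<Longrightarrow> mu i j a b \<in> Ac k" using mu_in by blast
lemma M_add'[simp]: "x \<in> M i \<Longrightarrow> y \<in> M i \<Longrightarrow> x + y \<in> M i" by blast
lemma M_neg'[simp]: "x \<in> M i \<Longrightarrow> - x \<in> M i" by blast
lemma M_sm'[simp]: "x \<in> M i \<Longrightarrow> smM sm c x \<in> M i" by blast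
lemma M_diff'[simp]: "x \<in> M i \<Longrightarrow> y \<in> M i \<Longrightarrow> x - y \<in> M i" by blast
lemma M_sgnx'[simp]: "x \<in> M i \<Longrightarrow> sgnx k x \<in> M i" by blast

lemma actM_sgnx_l: "a \<in> Ac l \<Longrightarrow> m \<in> M j \<Longrightarrow> aM l j (sgnx k a) m = sgnx k (aM l j a m)"
  by (simp add: sgnx_def actM_neg_l)
lemma actM_sgnx_r: "a \<in> Ac l \<Longrightarrow> m \<in> M j \<Longrightarrow> aM l j a (sgnx k m) = sgnx k (aM l j a m)"
  by (simp add: sgnx_def actM_neg_r)

lemma actM_diff_r: "a \<in> Ac l \<Longrightarrow> m \<in> M j \<Longrightarrow> m' \<in> M j \<Longrightarrow> aM l j a (m - m') = aM l j a m - aM l j a m'"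
  using actM_add_r[of a l m j "- m'"] actM_neg_r[of a l m' j] by (simp add: M_neg)
lemma actM_diff_l: "a \<in> Ac l \<Longrightarrow> a' \<in> Ac l \<Longrightarrow> m \<in> M j \<Longrightarrow> aM l j (a - a') m = aM l j a m - aM l j a' m"
  using actM_add_l[of a l "- a'" m j] actM_neg_l[of a' l m j] by (simp add: Ac_neg)
lemmas lin_rules = lin_diff[OF alphaL] lin_diff[OF deltaL] lin_add[OF alphaL] lin_neg[OF alphaL] lin_sm[OF alphaL] lin_sgnx[OF alphaL]
   lin_add[OF deltaL] lin_neg[OF deltaL] lin_sm[OF deltaL] lin_sgnx[OF deltaL]
lemmas act_rules = actM_diff_r actM_diff_l actM_add_l actM_add_r actM_neg_l actM_neg_r actM_sm_l actM_sm_r actM_sgnx_l actM_sgnx_r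
   smM_add smM_neg smM_sgnx sgnx_add

lemma N_unit: "m1 \<in> M (j - 1) \<Longrightarrow> m2 \<in> M j \<Longrightarrow> actN mu E deg 0 j (oneB one) (m1, m2) = (m1, m2)"
  by (simp add: actN_def oneB_def actM_one sgnx_def)

lemma N_act_in: "a1 \<in> Ac (i - 1) \<Longrightarrow> a2 \<in> Ac i \<Longrightarrow> m1 \<in> M (j - 1) \<Longrightarrow> m2 \<in> M j
  \<Longrightarrow> actN mu E deg i j (a1, a2) (m1, m2) \<in> Nset Ac E deg (i + j)"
  by (simp add: actN_def Nset_def)

lemma N_sc: "a1 \<in> Ac (i - 1) \<Longrightarrow> a2 \<in> Ac i \<Longrightarrow> m1 \<in> M (j - 1) \<Longrightarrow> m2 \<in> M j
  \<Longrightarrow> actN mu E deg i j (smB sm c (a1, a2)) (m1, m2) = smN sm c (actN mu E deg i j (a1, a2) (m1, m2))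
    \<and> actN mu E deg i j (a1, a2) (smN sm c (m1, m2)) = smN sm c (actN mu E deg i j (a1, a2) (m1, m2))"
  by (simp add: actN_def smB_def smN_def act_rules)

lemma N_add_l: "a1 \<in> Ac (i - 1) \<Longrightarrow> a2 \<in> Ac i \<Longrightarrow> a1' \<in> Ac (i - 1) \<Longrightarrow> a2' \<in> Ac i \<Longrightarrow> m1 \<in> M (j - 1) \<Longrightarrow> m2 \<in> M j
  \<Longrightarrow> actN mu E deg i j ((a1, a2) + (a1', a2')) (m1, m2) = actN mu E deg i j (a1, a2) (m1, m2) + actN mu E deg i j (a1', a2') (m1, m2)"
  by (simp add: actN_def act_rules algebra_simps)

lemma N_add_r: "a1 \<in> Ac (i - 1) \<Longrightarrow> a2 \<in> Ac i \<Longrightarrow> m1 \<in> M (j - 1) \<Longrightarrow> m2 \<in> M j \<Longrightarrow> m1' \<in> M (j - 1) \<Longrightarrow> m2' \<in> M j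
  \<Longrightarrow> actN mu E deg i j (a1, a2) ((m1, m2) + (m1', m2')) = actN mu E deg i j (a1, a2) (m1, m2) + actN mu E deg i j (a1, a2) (m1', m2')"
  by (simp add: actN_def act_rules algebra_simps)

lemma sgnx_plus: "sgnx (i + k) (x::'x::group_add) = sgnx i (sgnx k x)"
  by (auto simp: sgnx_def)

lemma N_assoc:
  assumes "a1 \<in> Ac (i - 1)" "a2 \<in> Ac i" "c1 \<in> Ac (k - 1)" "c2 \<in> Ac k" "m1 \<in> M (j - 1)" "m2 \<in> M j"
  shows "actN mu E deg (i + k) j (muB mu i k (a1, a2) (c1, c2)) (m1, m2)
       = actN mu E deg i (k + j) (a1, a2) (actN mu E deg k j (c1, c2) (m1, m2))"
proof -
  have s1: "aM (i + k - 1) j (mu (i - 1) k a1 c2) m2 = aM (i - 1) (k + j) a1 (aM k j c2 m2)"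
    by (rule actM_assoc) (use assms in auto)
  have s2: "aM (i + k - 1) j (mu i (k - 1) a2 c1) m2 = aM i (k + j - 1) a2 (aM (k - 1) j c1 m2)"
    by (rule actM_assoc) (use assms in auto)
  have s3: "aM (i + k) (j - 1) (mu i k a2 c2) m1 = aM i (k + j - 1) a2 (aM k (j - 1) c2 m1)"
    by (rule actM_assoc) (use assms in auto)
  have s4: "aM (i + k) j (mu i k a2 c2) m2 = aM i (k + j) a2 (aM k j c2 m2)"
    by (rule actM_assoc) (use assms in auto)
  show ?thesis using assms
    by (simp add: actN_def muB_def act_rules s1 s2 s3 s4 sgnx_plus)
qed

lemma xi_in'[simp]: "x \<in> M i \<Longrightarrow> k = i - 1 \<Longrightarrow> xi i x \<in> M k" using xi_in by blast
lemma tau_in'[simp]: "x \<in> M i \<Longrightarrow> k = i \<Longrightarrow> tau i x \<in> M k" using tau_in by blast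

lemma N_sub: "submod (smN sm) (Nset Ac E deg i)"
  unfolding submod_def Nset_def by (auto simp: smN_def zero_prod_def)

lemma N_dlin: "lin_on (smN sm) (smN sm) (Nset Ac E deg i) (Nset Ac E deg (i - 1)) (dN xi tau delta alpha i)"
  unfolding lin_on_def Nset_def
  by (auto simp: dN_def smN_def lin_add[OF xiL] lin_add[OF tauL] lin_add[OF deltaL] lin_add[OF alphaL]
      lin_sm[OF xiL] lin_sm[OF tauL] lin_sm[OF deltaL] lin_sm[OF alphaL] smM_add algebra_simps
      intro!: xi_in tau_in delta_in alpha_in)

lemma DG_in:
  assumes DG "n \<in> Nset Ac E deg i"
  shows "dN xi tau delta alpha i n \<in> Nset Ac E deg (i - 1)"
proof -
  have "\<forall>i. lin_on (smN sm) (smN sm) (Nset Ac E deg i) (Nset Ac E deg (i - 1)) (dN xi tau delta alpha i)"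
    using assms(1) unfolding N_is_dg_module_def dg_module_def by (elim conjE) assumption
  then show ?thesis using assms(2) unfolding lin_on_def by blast
qed

lemma DG_SF:
  assumes DG and bdd: "\<exists>n0. \<forall>e\<in>E. n0 \<le> deg e"
  shows "N_is_semi_free sm Ac mu one dA t E deg xi tau delta alpha"
proof -
  obtain n0 where n0: "\<forall>e\<in>E. n0 \<le> deg e" using bdd by blast
  define F where "F m = {x \<in> U. fst x < n0 + int m}" for m :: nat
  have dg: "dg_module (smB sm) (Bset Ac) (muB mu) (dB sm t dA) (oneB one)
               (smN sm) (Nset Ac E deg) (actN mu E deg) (dN xi tau delta alpha)"
    using assms(1) unfolding N_is_dg_module_def .
  have a: "\<forall>x\<in>U. snd x \<in> Nset Ac E deg (fst x)"
    by (auto simp: ub_def Nset_def bas_in)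
  have b: "\<forall>k. \<forall>n\<in>Nset Ac E deg k. \<exists>!c. finite {x. c x \<noteq> 0} \<and> (\<forall>x. c x \<noteq> 0 \<longrightarrow> x \<in> U)
             \<and> (\<forall>x\<in>U. c x \<in> Bset Ac (k - fst x))
             \<and> n = (\<Sum>x\<in>{x. c x \<noteq> 0}. actN mu E deg (k - fst x) (fst x) (c x) (snd x))"
    by (intro allI ballI decomp)
  have c: "mono F" unfolding F_def by (rule monoI) auto
  have d: "(\<Union>m. F m) = U"
  proof
    show "(\<Union>m. F m) \<subseteq> U" unfolding F_def by auto
    show "U \<subseteq> (\<Union>m. F m)"
    proof
      fix x assume "x \<in> U"
      then obtain e where e: "e \<in> E" "x = ub one deg e" by blast
      have "fst x < n0 + int (nat (deg e - n0 + 1))" using n0 e by (simp add: ub_def)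
      then show "x \<in> (\<Union>m. F m)" unfolding F_def using \<open>x \<in> U\<close> by (intro UN_I[of "nat (deg e - n0 + 1)"]) auto
    qed
  qed
  have e: "\<forall>m. \<forall>x\<in>F m. dN xi tau delta alpha (fst x) (snd x) \<in> bcomb (Bset Ac) (actN mu E deg) (\<Union>l<m. F l) (fst x - 1)"
  proof (intro allI ballI)
    fix m x assume x: "x \<in> F m"
    then have "x \<in> U" and xl: "fst x < n0 + int m" unfolding F_def by auto
    then obtain e where e: "e \<in> E" "x = ub one deg e" by blast
    then have lt: "deg e < n0 + int m" using xl by (simp add: ub_def)
    have "snd x \<in> Nset Ac E deg (fst x)" using a x unfolding F_def by blast
    then have dn: "dN xi tau delta alpha (fst x) (snd x) \<in> Nset Ac E deg (fst x - 1)" using DG_in[OF assms(1)] by blast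
    obtain c where c: "finite {y. c y \<noteq> 0}" "\<forall>y. c y \<noteq> 0 \<longrightarrow> y \<in> U" "\<forall>y\<in>U. c y \<in> Bset Ac (fst x - 1 - fst y)"
       "dN xi tau delta alpha (fst x) (snd x) = sumc (fst x - 1) c"
      using ex1_implies_ex[OF decomp[OF dn]] by blast
    have m1: "m \<ge> 1" using lt n0 e by (cases m) auto
    have sub: "c y \<noteq> 0 \<Longrightarrow> y \<in> (\<Union>l<m. F l)" for y
    proof -
      assume cy: "c y \<noteq> 0"
      then have "y \<in> U" using c by blast
      then obtain e' where e': "e' \<in> E" "y = ub one deg e'" by blast
      have "c y \<in> Bset Ac (fst x - 1 - fst y)" using c \<open>y \<in> U\<close> by blast
      then have "\<not> (fst x - 1 - fst y < 0)" using Bset_neg cy by blast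
      then have "fst y < n0 + int (m - 1)" using lt e e' m1 by (simp add: ub_def)
      then have "y \<in> F (m - 1)" unfolding F_def using \<open>y \<in> U\<close> by blast
      then show ?thesis using m1 by (intro UN_I[of "m - 1"]) auto
    qed
    have sub2: "(\<Union>l<m. F l) \<subseteq> U" unfolding F_def by auto
    show "dN xi tau delta alpha (fst x) (snd x) \<in> bcomb (Bset Ac) (actN mu E deg) (\<Union>l<m. F l) (fst x - 1)"
      unfolding bcomb_def
    proof (intro CollectI exI[of _ c] conjI)
      show "\<forall>y\<in>\<Union>l<m. F l. c y \<in> Bset Ac (fst x - 1 - fst y)" using c(3) sub2 by blast
    qed (use c sub in auto)
  qed
  show ?thesis
    unfolding N_is_semi_free_def semi_free_dg_module_def
    apply (rule conjI[OF dg])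
    apply (rule exI[of _ U])
    apply (rule exI[of _ F])
    by (intro conjI a b c d e)
qed

context
  fixes r :: "int \<Rightarrow> nat" and gam :: "int \<Rightarrow> nat \<Rightarrow> 'a"
  assumes fb: "graded_free_basis sm Ac r gam"
    and H1: "\<forall>i. \<forall>m\<in>M i. xi i m = - alpha i m"
    and H2: "\<forall>i. \<forall>m\<in>M i. tau i m = smM sm t m"
    and H3: "\<forall>i. \<forall>m\<in>M i. alpha (i - 1) (alpha i m) = - smM sm t (delta i m)"
    and H4: "\<forall>i. \<forall>m\<in>M (i + 1). delta i (alpha (i + 1) m) = alpha (i - 1) (delta (i + 1) m)"
    and H5: "\<forall>i j. \<forall>s\<in>{1..r i}. \<forall>m\<in>M j. delta (i + j) (aM i j (gam i s) m) = aM i (j - 2) (gam i s) (delta j m)"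
    and H6: "\<forall>i j. \<forall>s\<in>{1..r i}. \<forall>m\<in>M j. alpha (i + j) (aM i j (gam i s) m)
                    = aM (i - 1) j (dA i (gam i s)) m + sgnx i (aM i (j - 1) (gam i s) (alpha j m))"
begin

lemma dN_eq: "m1 \<in> M (i - 1) \<Longrightarrow> m2 \<in> M i \<Longrightarrow>
   dN xi tau delta alpha i (m1, m2) = (- alpha (i - 1) m1 + delta i m2, smM sm t m1 + alpha i m2)"
  using H1 H2 by (simp add: dN_def)

lemma N_dd: assumes "m1 \<in> M (i - 1)" "m2 \<in> M i"
  shows "dN xi tau delta alpha (i - 1) (dN xi tau delta alpha i (m1, m2)) = 0"
proof -
  have h3: "alpha (i - 2) (alpha (i - 1) m1) = - smM sm t (delta (i - 1) m1)"
    using H3[rule_format, of m1 "i - 1"] assms(1) by simp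
  have h4: "delta (i - 1) (alpha i m2) = alpha (i - 2) (delta i m2)"
    using H4[rule_format, of m2 "i - 1"] assms(2) by simp
  have h3': "alpha (i - 1) (alpha i m2) = - smM sm t (delta i m2)"
    using H3 assms(2) by blast
  have p: "- alpha (i - 1) m1 + delta i m2 \<in> M (i - 1 - 1)" using assms by simp
  have q: "smM sm t m1 + alpha i m2 \<in> M (i - 1)" using assms by simp
  show ?thesis
    unfolding dN_eq[OF assms] dN_eq[OF p q]
    using assms h3 h4 h3' by (simp add: lin_rules act_rules smM_diff algebra_simps zero_prod_def)
qed

lemma ext_d: "a \<in> Ac i \<Longrightarrow> m \<in> M j \<Longrightarrow> k = i + j \<Longrightarrow> l = j - 2 \<Longrightarrow> delta k (aM i j a m) = aM i l a (delta j m)"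
  using ext_da[OF fb H5 H6] by blast
lemma ext_a: "a \<in> Ac i \<Longrightarrow> m \<in> M j \<Longrightarrow> k = i + j \<Longrightarrow>
   alpha k (aM i j a m) = aM (i - 1) j (dA i a) m + sgnx i (aM i (j - 1) a (alpha j m))"
  using ext_da[OF fb H5 H6] by blast

lemma N_leib:
  assumes a1: "a1 \<in> Ac (i - 1)" and a2: "a2 \<in> Ac i" and m1: "m1 \<in> M (j - 1)" and m2: "m2 \<in> M j"
  shows "dN xi tau delta alpha (i + j) (actN mu E deg i j (a1, a2) (m1, m2))
     = actN mu E deg (i - 1) j (dB sm t dA i (a1, a2)) (m1, m2)
       + sgnx i (actN mu E deg i (j - 1) (a1, a2) (dN xi tau delta alpha j (m1, m2)))"
proof -
  define X where "X = aM (i - 1) j a1 m2 + sgnx i (aM i (j - 1) a2 m1)"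
  define Y where "Y = aM i j a2 m2"
  have X: "X \<in> M (i + j - 1)" and Y: "Y \<in> M (i + j)" unfolding X_def Y_def using assms by auto
  have act1: "actN mu E deg i j (a1, a2) (m1, m2) = (X, Y)" by (simp add: actN_def X_def Y_def)
  have e1: "alpha (i + j - 1) (aM (i - 1) j a1 m2) = aM (i - 2) j (dA (i - 1) a1) m2 + sgnx (i - 1) (aM (i - 1) (j - 1) a1 (alpha j m2))"
    using ext_a[OF a1 m2, of "i + j - 1"] by simp
  have e2: "alpha (i + j - 1) (aM i (j - 1) a2 m1) = aM (i - 1) (j - 1) (dA i a2) m1 + sgnx i (aM i (j - 2) a2 (alpha (j - 1) m1))"
    using ext_a[OF a2 m1, of "i + j - 1"] by simp
  have e3: "delta (i + j) Y = aM i (j - 2) a2 (delta j m2)"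
    unfolding Y_def using ext_d[OF a2 m2] by simp
  have e4: "alpha (i + j) Y = aM (i - 1) j (dA i a2) m2 + sgnx i (aM i (j - 1) a2 (alpha j m2))"
    unfolding Y_def using ext_a[OF a2 m2] by simp
  have lhs: "dN xi tau delta alpha (i + j) (actN mu E deg i j (a1, a2) (m1, m2))
     = (- alpha (i + j - 1) X + delta (i + j) Y, smM sm t X + alpha (i + j) Y)"
    unfolding act1 using dN_eq[OF X Y] by simp
  have p: "- alpha (j - 1) m1 + delta j m2 \<in> M (j - 1 - 1)" and q: "smM sm t m1 + alpha j m2 \<in> M (j - 1)"
    using assms by auto
  have rhs2: "dN xi tau delta alpha j (m1, m2) = (- alpha (j - 1) m1 + delta j m2, smM sm t m1 + alpha j m2)"
    using dN_eq[OF m1 m2] .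
  have da1: "dA (i - 1) a1 \<in> Ac (i - 2)" and da2: "dA i a2 \<in> Ac (i - 1)" using a1 a2 by auto
  have ax: "alpha (i + j - 1) X = aM (i - 2) j (dA (i - 1) a1) m2 + sgnx (i - 1) (aM (i - 1) (j - 1) a1 (alpha j m2))
       + sgnx i (aM (i - 1) (j - 1) (dA i a2) m1 + sgnx i (aM i (j - 2) a2 (alpha (j - 1) m1)))"
    unfolding X_def using assms e1 e2 by (simp add: lin_rules)
  have sgm: "sgnx (i - 1) x = - sgnx i x" for x :: "'e \<Rightarrow> 'a" by (simp add: sgnx_def)
  show ?thesis
    unfolding lhs rhs2 ax e3 e4
    using assms da1 da2
    by (simp add: actN_def dB_def X_def act_rules sgm sgnx_pair algebra_simps)
qed

lemma P3_DG: DG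
  unfolding N_is_dg_module_def dg_module_def
proof (intro conjI)
  show "\<forall>i. submod (smN sm) (Nset Ac E deg i)" using N_sub by blast
  show "\<forall>i. lin_on (smN sm) (smN sm) (Nset Ac E deg i) (Nset Ac E deg (i - 1)) (dN xi tau delta alpha i)"
    using N_dlin by blast
  show "\<forall>i. \<forall>n\<in>Nset Ac E deg i. dN xi tau delta alpha (i - 1) (dN xi tau delta alpha i n) = 0"
    by (auto simp: Nset_def N_dd)
  show "\<forall>i j. \<forall>b\<in>Bset Ac i. \<forall>n\<in>Nset Ac E deg j. actN mu E deg i j b n \<in> Nset Ac E deg (i + j)"
    by (auto simp: Bset_def Nset_def actN_def)
  show "\<forall>i j. \<forall>b\<in>Bset Ac i. \<forall>b'\<in>Bset Ac i. \<forall>n\<in>Nset Ac E deg j.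
      actN mu E deg i j (b + b') n = actN mu E deg i j b n + actN mu E deg i j b' n"
    by (auto simp: Bset_def Nset_def N_add_l simp del: add_Pair)
  show "\<forall>i j. \<forall>b\<in>Bset Ac i. \<forall>n\<in>Nset Ac E deg j. \<forall>n'\<in>Nset Ac E deg j.
      actN mu E deg i j b (n + n') = actN mu E deg i j b n + actN mu E deg i j b n'"
    by (auto simp: Bset_def Nset_def N_add_r simp del: add_Pair)
  show "\<forall>i j c. \<forall>b\<in>Bset Ac i. \<forall>n\<in>Nset Ac E deg j.
      actN mu E deg i j (smB sm c b) n = smN sm c (actN mu E deg i j b n) \<and>
      actN mu E deg i j b (smN sm c n) = smN sm c (actN mu E deg i j b n)"
    by (auto simp: Bset_def Nset_def N_sc simp del: smB_def smN_def)
  show "\<forall>j. \<forall>n\<in>Nset Ac E deg j. actN mu E deg 0 j (oneB one) n = n"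
    by (auto simp: Nset_def N_unit)
  show "\<forall>i k j. \<forall>b\<in>Bset Ac i. \<forall>b'\<in>Bset Ac k. \<forall>n\<in>Nset Ac E deg j.
      actN mu E deg (i + k) j (muB mu i k b b') n = actN mu E deg i (k + j) b (actN mu E deg k j b' n)"
    by (auto simp: Bset_def Nset_def N_assoc)
  show "\<forall>i j. \<forall>b\<in>Bset Ac i. \<forall>n\<in>Nset Ac E deg j.
      dN xi tau delta alpha (i + j) (actN mu E deg i j b n) =
      actN mu E deg (i - 1) j (dB sm t dA i b) n + sgnx i (actN mu E deg i (j - 1) b (dN xi tau delta alpha j n))"
    by (auto simp: Bset_def Nset_def N_leib)
qed

end

end

theorem lemma2p6:
  fixes sm :: "'r::comm_ring_1 \<Rightarrow> 'a::ab_group_add \<Rightarrow> 'a"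
    and Ac :: "int \<Rightarrow> 'a set"
    and mu :: "int \<Rightarrow> int \<Rightarrow> 'a \<Rightarrow> 'a \<Rightarrow> 'a"
    and one :: 'a
    and dA :: "int \<Rightarrow> 'a \<Rightarrow> 'a"
    and r :: "int \<Rightarrow> nat"
    and gam :: "int \<Rightarrow> nat \<Rightarrow> 'a"
    and t :: 'r
    and E :: "'e set"
    and deg :: "'e \<Rightarrow> int"
    and xi tau delta alpha :: "int \<Rightarrow> ('e \<Rightarrow> 'a) \<Rightarrow> ('e \<Rightarrow> 'a)"
  assumes noeth: "noetherian_ring TYPE('r)"
    and A: "comm_dg_algebra sm Ac mu one dA"
    and A_free: "graded_free_basis sm Ac r gam"
    and beta_bdd: "\<exists>n0. \<forall>e\<in>E. n0 \<le> deg e"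
    and xi_lin: "\<forall>i. lin_on (smM sm) (smM sm) (Mset Ac E deg i) (Mset Ac E deg (i - 1)) (xi i)"
    and tau_lin: "\<forall>i. lin_on (smM sm) (smM sm) (Mset Ac E deg i) (Mset Ac E deg i) (tau i)"
    and delta_lin: "\<forall>i. lin_on (smM sm) (smM sm) (Mset Ac E deg i) (Mset Ac E deg (i - 2)) (delta i)"
    and alpha_lin: "\<forall>i. lin_on (smM sm) (smM sm) (Mset Ac E deg i) (Mset Ac E deg (i - 1)) (alpha i)"
  shows
    "(N_is_semi_free sm Ac mu one dA t E deg xi tau delta alpha
        \<longleftrightarrow> N_is_dg_module sm Ac mu one dA t E deg xi tau delta alpha)
   \<and> (N_is_dg_module sm Ac mu one dA t E deg xi tau delta alpha
        \<longleftrightarrow> (\<forall>i j.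
               (\<forall>m\<in>Mset Ac E deg i. xi i m = - alpha i m)
             \<and> (\<forall>m\<in>Mset Ac E deg i. tau i m = smM sm t m)
             \<and> (\<forall>m\<in>Mset Ac E deg i. alpha (i - 1) (alpha i m) = - smM sm t (delta i m))
             \<and> (\<forall>m\<in>Mset Ac E deg (i + 1). delta i (alpha (i + 1) m) = alpha (i - 1) (delta (i + 1) m))
             \<and> (\<forall>s\<in>{1..r i}. \<forall>m\<in>Mset Ac E deg j.
                  delta (i + j) (actM mu E deg i j (gam i s) m)
                    = actM mu E deg i (j - 2) (gam i s) (delta j m))
             \<and> (\<forall>s\<in>{1..r i}. \<forall>m\<in>Mset Ac E deg j.
                  alpha (i + j) (actM mu E deg i j (gam i s) m)
                    = actM mu E deg (i - 1) j (dA i (gam i s)) m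
                      + sgnx i (actM mu E deg i (j - 1) (gam i s) (alpha j m)))))
   \<and> (N_is_dg_module sm Ac mu one dA t E deg xi tau delta alpha
        \<longrightarrow> (\<forall>i. \<forall>n\<in>Nset Ac E deg i.
               dN xi tau delta alpha i n
                 = (- alpha (i - 1) (fst n) + delta i (snd n), smM sm t (fst n) + alpha i (snd n))))"
  proof -
  have I: "dgN sm Ac mu one dA E deg xi tau delta alpha"
    unfolding dgN_def dgN_axioms_def dgA_def using A xi_lin tau_lin delta_lin alpha_lin by blast
  interpret L: dgN sm Ac mu one dA E deg t xi tau delta alpha using I by simp
  show ?thesis
  proof (intro conjI)
    show "N_is_semi_free sm Ac mu one dA t E deg xi tau delta alpha
        \<longleftrightarrow> N_is_dg_module sm Ac mu one dA t E deg xi tau delta alpha"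
      using L.DG_SF[OF _ beta_bdd]
      unfolding N_is_semi_free_def semi_free_dg_module_def N_is_dg_module_def by blast
    show "N_is_dg_module sm Ac mu one dA t E deg xi tau delta alpha
        \<longrightarrow> (\<forall>i. \<forall>n\<in>Nset Ac E deg i.
               dN xi tau delta alpha i n
                 = (- alpha (i - 1) (fst n) + delta i (snd n), smM sm t (fst n) + alpha i (snd n)))"
      using L.DG_fact1 by (auto simp: Nset_def dN_def)
    show "N_is_dg_module sm Ac mu one dA t E deg xi tau delta alpha
        \<longleftrightarrow> (\<forall>i j.
               (\<forall>m\<in>Mset Ac E deg i. xi i m = - alpha i m)
             \<and> (\<forall>m\<in>Mset Ac E deg i. tau i m = smM sm t m)
             \<and> (\<forall>m\<in>Mset Ac E deg i. alpha (i - 1) (alpha i m) = - smM sm t (delta i m))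
             \<and> (\<forall>m\<in>Mset Ac E deg (i + 1). delta i (alpha (i + 1) m) = alpha (i - 1) (delta (i + 1) m))
             \<and> (\<forall>s\<in>{1..r i}. \<forall>m\<in>Mset Ac E deg j.
                  delta (i + j) (actM mu E deg i j (gam i s) m)
                    = actM mu E deg i (j - 2) (gam i s) (delta j m))
             \<and> (\<forall>s\<in>{1..r i}. \<forall>m\<in>Mset Ac E deg j.
                  alpha (i + j) (actM mu E deg i j (gam i s) m)
                    = actM mu E deg (i - 1) j (dA i (gam i s)) m
                      + sgnx i (actM mu E deg i (j - 1) (gam i s) (alpha j m))))"
      (is "_ \<longleftrightarrow> ?P")
    proof
      assume dg: "N_is_dg_module sm Ac mu one dA t E deg xi tau delta alpha"
      have gin: "\<And>i s. s \<in> {1..r i} \<Longrightarrow> gam i s \<in> Ac i" using A_free unfolding graded_free_basis_def by blast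
      have f4: "delta i (alpha (i + 1) m) = alpha (i - 1) (delta (i + 1) m)" if "m \<in> Mset Ac E deg (i + 1)" for i m
        using conjunct2[OF L.DG_fact2[OF dg that]] by simp
      show ?P
      proof -
        have c1: "\<forall>i. \<forall>m\<in>Mset Ac E deg i. xi i m = - alpha i m" using L.DG_fact1[OF dg] by blast
        have c2: "\<forall>i. \<forall>m\<in>Mset Ac E deg i. tau i m = smM sm t m" using L.DG_fact1[OF dg] by blast
        have c3: "\<forall>i. \<forall>m\<in>Mset Ac E deg i. alpha (i - 1) (alpha i m) = - smM sm t (delta i m)"
          using L.DG_fact2[OF dg] by blast
        have c4: "\<forall>i. \<forall>m\<in>Mset Ac E deg (i + 1). delta i (alpha (i + 1) m) = alpha (i - 1) (delta (i + 1) m)"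
          using f4 by blast
        have c5: "\<forall>i j. \<forall>s\<in>{1..r i}. \<forall>m\<in>Mset Ac E deg j.
                  delta (i + j) (actM mu E deg i j (gam i s) m) = actM mu E deg i (j - 2) (gam i s) (delta j m)"
          using L.DG_fact3[OF dg gin] by blast
        have c6: "\<forall>i j. \<forall>s\<in>{1..r i}. \<forall>m\<in>Mset Ac E deg j.
                  alpha (i + j) (actM mu E deg i j (gam i s) m)
                    = actM mu E deg (i - 1) j (dA i (gam i s)) m + sgnx i (actM mu E deg i (j - 1) (gam i s) (alpha j m))"
          using L.DG_fact3[OF dg gin] by blast
        show ?P using c1 c2 c3 c4 c5 c6 by blast
      qed
    next
      assume P: ?P
      show "N_is_dg_module sm Ac mu one dA t E deg xi tau delta alpha"
      proof (rule L.P3_DG[OF A_free])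
        note Q = P[rule_format]
        show "\<forall>i. \<forall>m\<in>Mset Ac E deg i. xi i m = - alpha i m" using Q[THEN conjunct1] by blast
        show "\<forall>i. \<forall>m\<in>Mset Ac E deg i. tau i m = smM sm t m" using Q[THEN conjunct2, THEN conjunct1] by blast
        show "\<forall>i. \<forall>m\<in>Mset Ac E deg i. alpha (i - 1) (alpha i m) = - smM sm t (delta i m)"
          using Q[THEN conjunct2, THEN conjunct2, THEN conjunct1] by blast
        show "\<forall>i. \<forall>m\<in>Mset Ac E deg (i + 1). delta i (alpha (i + 1) m) = alpha (i - 1) (delta (i + 1) m)"
          using Q[THEN conjunct2, THEN conjunct2, THEN conjunct2, THEN conjunct1] by blast
        show "\<forall>i j. \<forall>s\<in>{1..r i}. \<forall>m\<in>Mset Ac E deg j.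
                  delta (i + j) (actM mu E deg i j (gam i s) m) = actM mu E deg i (j - 2) (gam i s) (delta j m)"
          using Q[THEN conjunct2, THEN conjunct2, THEN conjunct2, THEN conjunct2, THEN conjunct1] by blast
        show "\<forall>i j. \<forall>s\<in>{1..r i}. \<forall>m\<in>Mset Ac E deg j.
                  alpha (i + j) (actM mu E deg i j (gam i s) m)
                    = actM mu E deg (i - 1) j (dA i (gam i s)) m + sgnx i (actM mu E deg i (j - 1) (gam i s) (alpha j m))"
          using Q[THEN conjunct2, THEN conjunct2, THEN conjunct2, THEN conjunct2, THEN conjunct2] by blast
      qed
    qed
  qed
qed


end
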